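(* Let $q>0$, let $I=(i_1,\dots,i_k)$ be an increasing sequence of integers contained in $\{1,\dots,n\}$ and let $\pi\sim\mu_{n,q}$. Then for any integer $1\le b\le n-i_k$, $\pi_I$ and $\pi_{I+b}$ have the same distribution, i.e. $\mathbb{P}(\pi_I=\omega)=\mathbb{P}(\pi_{I+b}=\omega)$ for every $\omega\in S_k$.
   Context: For $q>0$ and $n\ge1$, $\mu_{n,q}(\pi)=q^{\mathrm{inv}(\pi)}/Z_{n,q}$ on $S_n$, with $\mathrm{inv}(\pi)$ the number of pairs $i<j$ with $\pi(i)>\pi(j)$ and $Z_{n,q}$ a normalizing constant. For an increasing sequence $I=(i_1,\dots,i_k)$, $I+b=(i_1+b,\dots,i_k+b)$, and $\pi_I\in S_k$ denotes the induced relative ordering: $\pi_I(j)>\pi_I(j')$ if and only if $\pi(i_j)>\pi(i_{j'})$. *)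

theory Defs
  imports "HOL-Combinatorics.Permutations" Complex_Main
begin

definition perms :: "nat \<Rightarrow> (nat \<Rightarrow> nat) set" where
  "perms n = {p. p permutes {1..n}}"

definition inv_count :: "nat \<Rightarrow> (nat \<Rightarrow> nat) \<Rightarrow> nat" where
  "inv_count n p = card {(i, j). i \<in> {1..n} \<and> j \<in> {1..n} \<and> i < j \<and> p i > p j}"

definition mallows_Z :: "nat \<Rightarrow> real \<Rightarrow> real" where
  "mallows_Z n q = (\<Sum>p\<in>perms n. q ^ inv_count n p)"

definition mallows :: "nat \<Rightarrow> real \<Rightarrow> (nat \<Rightarrow> nat) \<Rightarrow> real" where
  "mallows n q p = q ^ inv_count n p / mallows_Z n q"

text \<open>Induced pattern \<open>\<pi>_I \<in> S_k\<close> for the index list \<open>I = [i_1,\<dots>,i_k]\<close>: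
  position \<open>j \<in> {1..k}\<close> is mapped to the rank of \<open>\<pi>(i_j)\<close> among \<open>\<pi>(i_1),\<dots>,\<pi>(i_k)\<close>.\<close>
definition pattern :: "(nat \<Rightarrow> nat) \<Rightarrow> nat list \<Rightarrow> nat \<Rightarrow> nat" where
  "pattern p I j = (if j \<in> {1..length I}
      then card {j' \<in> {1..length I}. p (I ! (j' - 1)) \<le> p (I ! (j - 1))}
      else j)"

definition pattern_prob :: "nat \<Rightarrow> real \<Rightarrow> nat list \<Rightarrow> (nat \<Rightarrow> nat) \<Rightarrow> real" where
  "pattern_prob n q I \<omega> = (\<Sum>p\<in>{p \<in> perms n. pattern p I = \<omega>}. mallows n q p)"

end

theory Submission imports Defs begin

definition sv :: "nat \<Rightarrow> nat \<Rightarrow> nat" where "sv v y = (if y < v then y else y - 1)"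
definition ew :: "nat \<Rightarrow> nat \<Rightarrow> nat" where "ew w z = (if z < w then z else z + 1)"
definition Phi :: "nat \<Rightarrow> (nat \<Rightarrow> nat) \<Rightarrow> nat \<Rightarrow> nat" where
  "Phi n p x = (if x = 1 then n + 1 - p n else if 2 \<le> x \<and> x \<le> n
      then ew (n + 1 - p n) (sv (p n) (p (x - 1))) else x)"

lemma h_less:
  assumes "v \<in> {1..n}" "w \<in> {1..n}" "y1 \<in> {1..n}" "y2 \<in> {1..n}" "y1 \<noteq> v" "y2 \<noteq> v"
  shows "(ew w (sv v y1) < ew w (sv v y2)) = (y1 < y2)"
  using assms unfolding sv_def ew_def by (simp split: if_split) linarith?

lemma h_range:
  assumes "v \<in> {1..n}" "w \<in> {1..n}" "y \<in> {1..n}" "y \<noteq> v"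
  shows "ew w (sv v y) \<in> {1..n}" "ew w (sv v y) \<noteq> w"
  using assms by (auto simp: sv_def ew_def)

lemma h_inj:
  assumes "v \<in> {1..n}" "w \<in> {1..n}" "y1 \<in> {1..n}" "y2 \<in> {1..n}" "y1 \<noteq> v" "y2 \<noteq> v"
    "ew w (sv v y1) = ew w (sv v y2)"
  shows "y1 = y2"
  using h_less[OF assms(1-6)] h_less[OF assms(1,2,4,3,6,5)] assms(7)
  by (metis less_irrefl linorder_neqE_nat)

context
  fixes n :: nat and p :: "nat \<Rightarrow> nat"
  assumes n: "n \<ge> 1" and p: "p permutes {1..n}"
begin

lemma pv: "p n \<in> {1..n}" using n permutes_in_image[OF p, of n] by simp
lemma pin: "x \<in> {1..n} \<Longrightarrow> p x \<in> {1..n}" using permutes_in_image[OF p, of x] by blast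
lemma pne: "x \<in> {1..n-1} \<Longrightarrow> p x \<noteq> p n"
proof
  assume x: "x \<in> {1..n-1}" and e: "p x = p n"
  have "x = n" using injD[OF permutes_inj[OF p] e] .
  then show False using x n by simp
qed

lemma Phi_1: "Phi n p 1 = n + 1 - p n" by (simp add: Phi_def)
lemma Phi_Suc: "x \<in> {1..n-1} \<Longrightarrow> Phi n p (x+1) = ew (n + 1 - p n) (sv (p n) (p x))"
proof -
  assume x: "x \<in> {1..n-1}"
  then have c: "x + 1 \<noteq> 1" "2 \<le> x + 1 \<and> x + 1 \<le> n" by auto
  show ?thesis unfolding Phi_def using c by (simp only: if_False if_True add_diff_cancel_right' simp_thms)
qed

lemma w_in: "n + 1 - p n \<in> {1..n}" using pv by auto

lemma Phi_less: "a \<in> {1..n-1} \<Longrightarrow> b \<in> {1..n-1} \<Longrightarrow> (Phi n p (a+1) < Phi n p (b+1)) = (p a < p b)"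
  apply (simp only: Phi_Suc)
  apply (rule h_less[OF pv w_in])
  using pin pne by auto

lemma Phi_range: "x \<in> {1..n} \<Longrightarrow> Phi n p x \<in> {1..n}"
proof -
  assume x: "x \<in> {1..n}"
  show ?thesis
  proof (cases "x = 1")
    case True then show ?thesis using w_in by (simp add: Phi_def)
  next
    case False
    then obtain y where y: "x = y + 1" "y \<in> {1..n-1}" using x by (cases x) auto
    show ?thesis unfolding y(1) Phi_Suc[OF y(2)]
      by (rule h_range[OF pv w_in]) (use y pin pne in auto)
  qed
qed

lemma Phi_ne1: "x \<in> {2..n} \<Longrightarrow> Phi n p x \<noteq> n + 1 - p n"
proof -
  assume x: "x \<in> {2..n}"
  then obtain y where y: "x = y + 1" "y \<in> {1..n-1}" by (cases x) auto
  show ?thesis unfolding y(1) Phi_Suc[OF y(2)]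
    by (rule h_range[OF pv w_in]) (use y pin pne in auto)
qed

lemma Phi_inj: "inj_on (Phi n p) {1..n}"
proof (rule inj_onI)
  fix a b assume a: "a \<in> {1..n}" and b: "b \<in> {1..n}" and e: "Phi n p a = Phi n p b"
  show "a = b"
  proof (cases "a = 1")
    case True
    have "Phi n p a = n+1-p n" using True Phi_1 by simp
    then show ?thesis using Phi_ne1[of b] e b True by (cases "b = 1") auto
  next
    case False
    show ?thesis
    proof (cases "b = 1")
      case True
      have "Phi n p b = n+1-p n" using True Phi_1 by simp
      then show ?thesis using Phi_ne1[of a] e a False by auto
    next
      case F2: False
      obtain a' where a': "a = a' + 1" "a' \<in> {1..n-1}" using a False by (cases a) auto
      obtain b' where b': "b = b' + 1" "b' \<in> {1..n-1}" using b F2 by (cases b) auto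
      have "p a' = p b'"
        using e unfolding a'(1) b'(1) Phi_Suc[OF a'(2)] Phi_Suc[OF b'(2)]
        by (rule h_inj[OF pv w_in, rotated 4]) (use a' b' pin pne in auto)
      then have "a' = b'" using permutes_inj[OF p] by (auto dest: injD)
      then show ?thesis using a' b' by simp
    qed
  qed
qed

lemma Phi_perm: "Phi n p permutes {1..n}"
proof (rule bij_imp_permutes)
  have "Phi n p ` {1..n} = {1..n}"
    by (rule endo_inj_surj) (use Phi_range Phi_inj in auto)
  then show "bij_betw (Phi n p) {1..n} {1..n}" using Phi_inj by (simp add: bij_betw_def)
  show "\<And>x. x \<notin> {1..n} \<Longrightarrow> Phi n p x = x" using n by (auto simp: Phi_def)
qed


lemma Phi_le: "a \<in> {1..n-1} \<Longrightarrow> b \<in> {1..n-1} \<Longrightarrow> (Phi n p (a+1) \<le> Phi n p (b+1)) = (p a \<le> p b)"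
  using Phi_less[of b a] by (simp add: not_less[symmetric])

lemma Phi_pattern:
  assumes I: "set I \<subseteq> {1..n-1}"
  shows "pattern (Phi n p) (map (\<lambda>i. i+1) I) = pattern p I"
proof
  fix j
  show "pattern (Phi n p) (map (\<lambda>i. i+1) I) j = pattern p I j"
  proof (cases "j \<in> {1..length I}")
    case False
    then have F2: "j \<notin> {1..length (map (\<lambda>i. i+1) I)}" by simp
    show ?thesis unfolding pattern_def by (simp only: False F2 if_False)
  next
    case True
    have "{j' \<in> {1..length I}. Phi n p (map (\<lambda>i. i+1) I ! (j' - 1)) \<le> Phi n p (map (\<lambda>i. i+1) I ! (j - 1))}
        = {j' \<in> {1..length I}. p (I ! (j' - 1)) \<le> p (I ! (j - 1))}"
    proof (rule Collect_cong)
      fix j' 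
      show "(j' \<in> {1..length I} \<and> Phi n p (map (\<lambda>i. i+1) I ! (j' - 1)) \<le> Phi n p (map (\<lambda>i. i+1) I ! (j - 1)))
          = (j' \<in> {1..length I} \<and> p (I ! (j' - 1)) \<le> p (I ! (j - 1)))"
      proof (cases "j' \<in> {1..length I}")
        case T2: True
        have "j'-1 < length I" using T2 by auto
        then have "I ! (j'-1) \<in> set I" by (rule nth_mem)
        then have a: "I ! (j'-1) \<in> {1..n-1}" using I by blast
        have "j-1 < length I" using True by auto
        then have "I ! (j-1) \<in> set I" by (rule nth_mem)
        then have b: "I ! (j-1) \<in> {1..n-1}" using I by blast
        have "map (\<lambda>i. i+1) I ! (j' - 1) = I ! (j'-1) + 1" using T2 by auto
        moreover have "map (\<lambda>i. i+1) I ! (j - 1) = I ! (j-1) + 1" using True by auto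
        ultimately show ?thesis using Phi_le[OF a b] by simp
      next
        case False then show ?thesis by blast
      qed
    qed
    then show ?thesis using True by (simp add: pattern_def)
  qed
qed

end

lemma card_perm_filter:
  assumes "f permutes S"
  shows "card {i\<in>S. Q (f i)} = card {y\<in>S. Q y}"
proof -
  have "f ` {i\<in>S. Q (f i)} = {y\<in>S. Q y}"
    using permutes_image[OF assms] by (auto simp: permutes_in_image[OF assms])
  moreover have "inj_on f {i\<in>S. Q (f i)}"
    using permutes_inj[OF assms] by (auto intro: inj_on_subset)
  ultimately show ?thesis by (metis card_image)
qed

context
  fixes n :: nat and p :: "nat \<Rightarrow> nat"
  assumes n: "n \<ge> 1" and p: "p permutes {1..n}"
begin

definition "A2 = {(i,j). i\<in>{1..n-1} \<and> j\<in>{1..n-1} \<and> i<j \<and> p i > p j}"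

lemma inv_p: "inv_count n p = (n - p n) + card A2"
proof -
  let ?A = "{(i, j). i \<in> {1..n} \<and> j \<in> {1..n} \<and> i < j \<and> p i > p j}"
  let ?A1 = "(\<lambda>i. (i,n)) ` {i\<in>{1..n}. p n < p i}"
  have eq: "?A = ?A1 \<union> A2"
  proof (intro set_eqI iffI)
    fix x assume "x \<in> ?A"
    then obtain i j where x: "x = (i,j)" "i \<in> {1..n}" "j \<in> {1..n}" "i < j" "p i > p j" by blast
    show "x \<in> ?A1 \<union> A2"
    proof (cases "j = n")
      case True then show ?thesis using x by auto
    next
      case False then show ?thesis using x by (auto simp: A2_def)
    qed
  next
    fix x assume "x \<in> ?A1 \<union> A2"
    then show "x \<in> ?A"
    proof
      assume "x \<in> ?A1"
      then obtain i where x: "x = (i,n)" "i \<in> {1..n}" "p n < p i" by blast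
      have "i \<noteq> n" using x by auto
      then show ?thesis using x by auto
    next
      assume "x \<in> A2" then show ?thesis by (auto simp: A2_def)
    qed
  qed
  have fin: "finite ?A1" "finite A2"
    by (auto intro: finite_subset[of _ "{1..n} \<times> {1..n}"] simp: A2_def)
  have disj: "?A1 \<inter> A2 = {}" by (auto simp: A2_def)
  have "card ?A1 = card {i\<in>{1..n}. p n < p i}" by (rule card_image) (auto intro: inj_onI)
  also have "\<dots> = card {y\<in>{1..n}. p n < y}" by (rule card_perm_filter[OF p])
  also have "{y\<in>{1..n}. p n < y} = {p n + 1..n}" using pv[OF n p] by auto
  finally have c1: "card ?A1 = n - p n" by simp
  show ?thesis unfolding inv_count_def eq using card_Un_disjoint[OF fin disj] c1 by simp
qed

lemma inv_Phi: "inv_count n (Phi n p) = (n - p n) + card A2"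
proof -
  let ?P = "Phi n p"
  let ?B = "{(i, j). i \<in> {1..n} \<and> j \<in> {1..n} \<and> i < j \<and> ?P i > ?P j}"
  let ?B1 = "Pair (1::nat) ` {j\<in>{1..n}. ?P j < ?P 1}"
  let ?B2 = "(\<lambda>(i,j). (i+1,j+1)) ` A2"
  have P1: "?P 1 = n + 1 - p n" by (rule Phi_1[OF n p])
  have eq: "?B = ?B1 \<union> ?B2"
  proof (intro set_eqI iffI)
    fix x assume "x \<in> ?B"
    then obtain i j where x: "x = (i,j)" "i \<in> {1..n}" "j \<in> {1..n}" "i < j" "?P i > ?P j" by blast
    show "x \<in> ?B1 \<union> ?B2"
    proof (cases "i = 1")
      case True then show ?thesis using x by auto
    next
      case False
      obtain i' where i': "i = i' + 1" "i' \<in> {1..n-1}" using x False by (cases i) auto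
      obtain j' where j': "j = j' + 1" "j' \<in> {1..n-1}" using x False by (cases j) auto
      have "p i' > p j'" using x(5) Phi_less[OF n p j'(2) i'(2)] i' j' by simp
      then have "(i',j') \<in> A2" using i' j' x by (auto simp: A2_def)
      then show ?thesis using x i' j' by force
    qed
  next
    fix x assume "x \<in> ?B1 \<union> ?B2"
    then show "x \<in> ?B"
    proof
      assume "x \<in> ?B1"
      then obtain j where x: "x = (1,j)" "j \<in> {1..n}" "?P j < ?P 1" by blast
      have "j \<noteq> 1" using x by auto
      then show ?thesis using x by auto
    next
      assume "x \<in> ?B2"
      then obtain i j where x: "x = (i+1,j+1)" "(i,j) \<in> A2" by force
      then have ij: "i \<in> {1..n-1}" "j \<in> {1..n-1}" "i < j" "p i > p j" by (auto simp: A2_def)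
      have "?P (i+1) > ?P (j+1)" using Phi_less[OF n p ij(2) ij(1)] ij by simp
      then show ?thesis using x ij by auto
    qed
  qed
  have fin: "finite ?B1" "finite ?B2"
    by (auto intro: finite_subset[of _ "{1..n} \<times> {1..n}"] simp: A2_def)
  have disj: "?B1 \<inter> ?B2 = {}" by (auto simp: A2_def)
  have "card ?B1 = card {j\<in>{1..n}. ?P j < ?P 1}" by (rule card_image) (auto intro: inj_onI)
  also have "\<dots> = card {y\<in>{1..n}. y < ?P 1}" by (rule card_perm_filter[OF Phi_perm[OF n p]])
  also have "{y\<in>{1..n}. y < ?P 1} = {1..<n + 1 - p n}" using pv[OF n p] P1 by auto
  finally have c1: "card ?B1 = n - p n" using pv[OF n p] by simp
  have c2: "card ?B2 = card A2" by (rule card_image) (auto intro: inj_onI)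
  have cu: "card (?B1 \<union> ?B2) = card ?B1 + card ?B2" by (intro card_Un_disjoint fin disj)
  show ?thesis unfolding inv_count_def eq cu c1 c2 by simp
qed

lemma inv_eq: "inv_count n (Phi n p) = inv_count n p"
  using inv_p inv_Phi by simp

end

lemma Phi_inj_perms:
  assumes n: "n \<ge> 1" shows "inj_on (Phi n) (perms n)"
proof (rule inj_onI)
  fix p p' assume pp: "p \<in> perms n" "p' \<in> perms n" and e: "Phi n p = Phi n p'"
  have p: "p permutes {1..n}" and p': "p' permutes {1..n}" using pp by (auto simp: perms_def)
  have "Phi n p 1 = Phi n p' 1" using e by simp
  then have "n + 1 - p n = n + 1 - p' n" using Phi_1[OF n p] Phi_1[OF n p'] by simp
  then have vn: "p n = p' n" using pv[OF n p] pv[OF n p'] by auto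
  show "p = p'"
  proof
    fix x
    show "p x = p' x"
    proof (cases "x \<in> {1..n-1}")
      case True
      have "ew (n + 1 - p n) (sv (p n) (p x)) = ew (n + 1 - p n) (sv (p n) (p' x))"
        using fun_cong[OF e, of "x+1"] Phi_Suc[OF n p True] Phi_Suc[OF n p' True] vn by simp
      then show ?thesis
        by (rule h_inj[OF pv[OF n p] w_in[OF n p], rotated 4])
           (use True pin[OF n p] pin[OF n p'] pne[OF n p] pne[OF n p'] vn in auto)
    next
      case False
      show ?thesis
      proof (cases "x = n")
        case True then show ?thesis using vn by simp
      next
        case F: False
        then have "x \<notin> {1..n}" using False by auto
        then show ?thesis using permutes_not_in[OF p] permutes_not_in[OF p'] by simp
      qed
    qed
  qed
qed

lemma Phi_image_perms:
  assumes n: "n \<ge> 1" shows "Phi n ` perms n = perms n"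
  by (rule endo_inj_surj)
     (use Phi_inj_perms[OF n] Phi_perm[OF n] finite_permutations[of "{1..n}"] in \<open>auto simp: perms_def\<close>)

lemma step1:
  assumes n: "n \<ge> 1" and I: "set I \<subseteq> {1..n-1}"
  shows "pattern_prob n q I \<omega> = pattern_prob n q (map (\<lambda>i. i+1) I) \<omega>"
proof -
  let ?S = "{p \<in> perms n. pattern p I = \<omega>}"
  let ?T = "{p \<in> perms n. pattern p (map (\<lambda>i. i+1) I) = \<omega>}"
  have "?T = Phi n ` ?S"
  proof (intro set_eqI iffI)
    fix x assume x: "x \<in> ?T"
    then obtain p where p: "p \<in> perms n" "x = Phi n p" using Phi_image_perms[OF n] by blast
    have "pattern p I = \<omega>" using x p Phi_pattern[OF n _ I, of p] by (auto simp: perms_def)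
    then show "x \<in> Phi n ` ?S" using p by auto
  next
    fix x assume "x \<in> Phi n ` ?S"
    then obtain p where p: "p \<in> perms n" "x = Phi n p" "pattern p I = \<omega>" by blast
    then show "x \<in> ?T" using Phi_pattern[OF n _ I, of p] Phi_perm[OF n, of p] by (auto simp: perms_def)
  qed
  moreover have "inj_on (Phi n) ?S" using Phi_inj_perms[OF n] by (auto intro: inj_on_subset)
  ultimately have "pattern_prob n q (map (\<lambda>i. i+1) I) \<omega> = (\<Sum>p\<in>?S. mallows n q (Phi n p))"
    unfolding pattern_prob_def by (simp add: sum.reindex)
  also have "\<dots> = pattern_prob n q I \<omega>"
    unfolding pattern_prob_def
    by (rule sum.cong) (auto simp: mallows_def inv_eq[OF n] perms_def)
  finally show ?thesis by simp
qed

lemma stepb: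
  assumes n: "n \<ge> 1" and I: "\<forall>i\<in>set I. 1 \<le> i \<and> i + b \<le> n"
  shows "pattern_prob n q I \<omega> = pattern_prob n q (map (\<lambda>i. i+b) I) \<omega>"
  using I
proof (induction b)
  case 0 then show ?case by simp
next
  case (Suc b)
  have "\<forall>i\<in>set I. 1 \<le> i \<and> i + b \<le> n" using Suc.prems by auto
  then have "pattern_prob n q I \<omega> = pattern_prob n q (map (\<lambda>i. i+b) I) \<omega>" by (rule Suc.IH)
  also have "\<dots> = pattern_prob n q (map (\<lambda>i. i+1) (map (\<lambda>i. i+b) I)) \<omega>"
    by (rule step1[OF n]) (use Suc.prems in auto)
  also have "map (\<lambda>i. i+1) (map (\<lambda>i. i+b) I) = map (\<lambda>i. i + Suc b) I" by simp
  finally show ?case .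
qed

lemma le_last:
  fixes I :: "nat list"
  assumes "I \<noteq> []" "sorted_wrt (<) I" "i \<in> set I" shows "i \<le> last I"
proof -
  have "I = butlast I @ [last I]" using assms(1) by simp
  then have "sorted_wrt (<) (butlast I @ [last I])" using assms(2) by simp
  then have "\<forall>x\<in>set (butlast I). x < last I" by (simp add: sorted_wrt_append)
  moreover have "i \<in> set (butlast I) \<or> i = last I" using assms(3) \<open>I = _\<close>
    by (metis in_set_butlast_appendI rotate1.simps(2) set_ConsD set_rotate1 append.right_neutral)
  ultimately show ?thesis by (metis less_imp_le order_refl)
qed

theorem lemma2p6:
  fixes n b :: nat and q :: real and I :: "nat list" and \<omega> :: "nat \<Rightarrow> nat"
  assumes "q > 0" and "n \<ge> 1"
    and "I \<noteq> []" and "sorted_wrt (<) I" and "set I \<subseteq> {1..n}"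
    and "1 \<le> b" and "b \<le> n - last I"
    and "\<omega> permutes {1..length I}"
  shows "pattern_prob n q I \<omega> = pattern_prob n q (map (\<lambda>i. i + b) I) \<omega>"
proof (rule stepb[OF assms(2)])
  have "last I \<in> set I" using assms(3) by simp
  then have "last I \<le> n" using assms(5) by auto
  then show "\<forall>i\<in>set I. 1 \<le> i \<and> i + b \<le> n"
    using le_last[OF assms(3,4)] assms(5,7) by fastforce
qed

end
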